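(* Fix an integer $k\ge0$. Then $n\mapsto p_S(n,n+k)$ is increasing on the integers $n\ge k$: for all integers $n_2>n_1\ge k$, $p_S(n_1,n_1+k)<p_S(n_2,n_2+k)$.
   Context: For integers $n,m$, $p_S(n,m)$ is the number of $(x_1,x_2,x_3,x_4)\in\mathbb{Z}_{\ge0}^4$ with $x_1+x_3+x_4=n$ and $x_2+x_3+2x_4=m$ (the number of vector partitions of $(n,m)$ with parts in $\{(1,0),(0,1),(1,1),(1,2)\}$). *)

theory Defs
  imports Main
begin

definition pS :: "int \<Rightarrow> int \<Rightarrow> nat" where
  "pS n m = card {(x1::nat, x2::nat, x3::nat, x4::nat).
      int x1 + int x3 + int x4 = n \<and> int x2 + int x3 + 2 * int x4 = m}"

end

theory Submission
  imports Defs
begin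

lemma pS_fin: "finite {(x1::nat, x2::nat, x3::nat, x4::nat).
      int x1 + int x3 + int x4 = n \<and> int x2 + int x3 + 2 * int x4 = m}"
proof (rule finite_subset)
  show "{(x1::nat, x2::nat, x3::nat, x4::nat).
      int x1 + int x3 + int x4 = n \<and> int x2 + int x3 + 2 * int x4 = m}
    \<subseteq> {..nat n} \<times> {..nat m} \<times> {..nat n} \<times> {..nat n}"
    by auto
qed auto

lemma pS_step:
  fixes k n :: int
  assumes "0 \<le> k" "k \<le> n"
  shows "pS n (n + k) < pS (n+1) (n + 1 + k)"
proof -
  let ?A = "{(x1::nat, x2::nat, x3::nat, x4::nat).
      int x1 + int x3 + int x4 = n \<and> int x2 + int x3 + 2 * int x4 = n + k}"
  let ?B = "{(x1::nat, x2::nat, x3::nat, x4::nat).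
      int x1 + int x3 + int x4 = n+1 \<and> int x2 + int x3 + 2 * int x4 = n + 1 + k}"
  let ?f = "\<lambda>(x1::nat, x2::nat, x3::nat, x4::nat). (Suc x1, Suc x2, x3, x4)"
  have inj: "inj_on ?f ?A" by (auto simp: inj_on_def)
  have sub: "?f ` ?A \<subseteq> ?B" by auto
  have w: "(0, 0, nat (n+1-k), nat k) \<in> ?B" using assms by auto
  have nw: "(0, 0, nat (n+1-k), nat k) \<notin> ?f ` ?A" by auto
  have ps: "?f ` ?A \<subset> ?B" using sub w nw by blast
  have "card (?f ` ?A) < card ?B" by (rule psubset_card_mono[OF pS_fin ps])
  moreover have "card (?f ` ?A) = card ?A" by (rule card_image[OF inj])
  ultimately show ?thesis unfolding pS_def by simp
qed

theorem lemmaA3: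
  fixes k n1 n2 :: int
  assumes "k \<ge> 0" and "k \<le> n1" and "n1 < n2"
  shows "pS n1 (n1 + k) < pS n2 (n2 + k)"
proof -
  have "\<And>d::nat. pS n1 (n1 + k) < pS (n1 + int d + 1) (n1 + int d + 1 + k)"
  proof -
    fix d :: nat
    show "pS n1 (n1 + k) < pS (n1 + int d + 1) (n1 + int d + 1 + k)"
    proof (induction d)
      case 0
      then show ?case using pS_step[of k n1] assms by simp
    next
      case (Suc d)
      have "pS (n1 + int d + 1) (n1 + int d + 1 + k) < pS (n1 + int d + 1 + 1) (n1 + int d + 1 + 1 + k)"
        using pS_step[of k "n1 + int d + 1"] assms by (simp add: add_ac)
      with Suc show ?case by (simp add: add_ac)
    qed
  qed
  from this[of "nat (n2 - n1 - 1)"] assms show ?thesis by simp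
qed

end
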